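(* For $\alpha=\pi/4$, no deterministic online algorithm can achieve competitive ratio better than $\frac{1+\sqrt2}{2}$.
   Context: Online drone coverage on a line. A drone has a fixed half angle-of-view $\alpha$. A drone at a point $T=(t_x,t_y)$ with $t_y\ge 0$ covers the segment $[t_x-t_y\tan\alpha,\ t_x+t_y\tan\alpha]$ of the $x$-axis. An input is a finite sequence of points $X_0=(0,0),X_1,\dots,X_n$ ($n\ge1$) on the $x$-axis, revealed one at a time. A solution is a sequence of drone positions $P_0=(0,0),P_1,\dots,P_n$ in the closed upper half-plane such that $P_i$ covers $X_0,\dots,X_i$; its cost is $\sum_{i=0}^{n-1}|P_iP_{i+1}|$. A deterministic online algorithm chooses $P_i$ knowing only $X_0,\dots,X_i$ (not $n$). $\mathrm{OPT}$ is the minimum cost of a solution when the whole input is known in advance. The competitive ratio of an algorithm is the supremum over inputs of its cost divided by $\mathrm{OPT}$. *)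

theory Defs
  imports "HOL-Analysis.Analysis"
begin

text \<open>Drone positions are points of the plane, modelled as real \<times> real
  (dist on real \<times> real is the Euclidean distance).  An input
  X_0 = (0,0), X_1, ..., X_n is given by the list xs = [x_1, ..., x_n] of the
  x-coordinates of X_1..X_n; the full point list is 0 # xs.\<close>

definition covers :: "real \<Rightarrow> real \<times> real \<Rightarrow> real \<Rightarrow> bool" where
  "covers \<alpha> T x \<longleftrightarrow> fst T - snd T * tan \<alpha> \<le> x \<and> x \<le> fst T + snd T * tan \<alpha>"

definition feasible :: "real \<Rightarrow> real list \<Rightarrow> (nat \<Rightarrow> real \<times> real) \<Rightarrow> bool" where
  "feasible \<alpha> xs P \<longleftrightarrow> P 0 = (0, 0) \<and>
     (\<forall>i \<le> length xs. snd (P i) \<ge> 0 \<and> (\<forall>j \<le> i. covers \<alpha> (P i) ((0 # xs) ! j)))"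

definition sol_cost :: "real list \<Rightarrow> (nat \<Rightarrow> real \<times> real) \<Rightarrow> real" where
  "sol_cost xs P = (\<Sum>i < length xs. dist (P i) (P (Suc i)))"

definition OPT :: "real \<Rightarrow> real list \<Rightarrow> real" where
  "OPT \<alpha> xs = Inf {sol_cost xs P | P. feasible \<alpha> xs P}"

text \<open>A deterministic online algorithm maps the revealed prefix [x_1,...,x_i]
  to the position P_i; it knows neither n nor future points.\<close>
definition online_alg :: "real \<Rightarrow> (real list \<Rightarrow> real \<times> real) \<Rightarrow> bool" where
  "online_alg \<alpha> A \<longleftrightarrow> A [] = (0, 0) \<and>
     (\<forall>ps. snd (A ps) \<ge> 0 \<and> (\<forall>x \<in> set (0 # ps). covers \<alpha> (A ps) x))"

definition alg_cost :: "(real list \<Rightarrow> real \<times> real) \<Rightarrow> real list \<Rightarrow> real" where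
  "alg_cost A xs = sol_cost xs (\<lambda>i. A (take i xs))"

end

theory Submission
  imports Defs
begin

lemma covers45: "covers (pi/4) T x \<longleftrightarrow> fst T - snd T \<le> x \<and> x \<le> fst T + snd T"
  by (simp add: covers_def tan_45)

lemma cs2: fixes a b x y :: real shows "a*x + b*y \<le> sqrt (a\<^sup>2+b\<^sup>2) * sqrt (x\<^sup>2+y\<^sup>2)"
proof -
  have "(a*x+b*y)\<^sup>2 \<le> (a\<^sup>2+b\<^sup>2)*(x\<^sup>2+y\<^sup>2)"
  proof -
    have "0 \<le> (a*y - b*x)\<^sup>2" by simp
    thus ?thesis by (simp add: power2_eq_square algebra_simps)
  qed
  hence "sqrt ((a*x+b*y)\<^sup>2) \<le> sqrt ((a\<^sup>2+b\<^sup>2)*(x\<^sup>2+y\<^sup>2))" by (rule real_sqrt_le_mono)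
  hence "\<bar>a*x+b*y\<bar> \<le> sqrt (a\<^sup>2+b\<^sup>2) * sqrt (x\<^sup>2+y\<^sup>2)" by (simp add: real_sqrt_mult)
  thus ?thesis by linarith
qed

lemma step_ineq:
  fixes T0 T1 :: "real \<times> real" and s \<beta> :: real
  assumes "s = 1 \<or> s = -1"
  shows "((snd T1 + s*fst T1) - (snd T0 + s*fst T0)) + \<beta>*((snd T1 - s*fst T1) - (snd T0 - s*fst T0))
          \<le> sqrt (2*(1+\<beta>\<^sup>2)) * dist T0 T1"
proof -
  have ss: "s * s = 1" using assms by auto
  have e1: "((snd T1 + s*fst T1) - (snd T0 + s*fst T0)) + \<beta>*((snd T1 - s*fst T1) - (snd T0 - s*fst T0))
     = (s*(1-\<beta>))*(fst T1 - fst T0) + (1+\<beta>)*(snd T1 - snd T0)" by (simp add: algebra_simps)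
  have e2: "(s*(1-\<beta>))\<^sup>2 + (1+\<beta>)\<^sup>2 = 2*(1+\<beta>\<^sup>2)"
  proof -
    have "(s*(1-\<beta>))\<^sup>2 = (s * s)*(1-\<beta>)\<^sup>2" by (simp add: power2_eq_square algebra_simps)
    thus ?thesis using ss by (simp add: power2_eq_square algebra_simps)
  qed
  have e3: "dist T0 T1 = sqrt ((fst T1 - fst T0)\<^sup>2 + (snd T1 - snd T0)\<^sup>2)"
    by (simp add: dist_prod_def dist_real_def power2_commute)
  show ?thesis unfolding e1 e3 using cs2[of "s*(1-\<beta>)" "fst T1 - fst T0" "1+\<beta>" "snd T1 - snd T0"] e2 by simp
qed

lemma OPT_bounds:
  assumes ne: "xs \<noteq> []" and T0: "snd T \<ge> 0" and cov: "\<forall>x\<in>set (0#xs). covers \<alpha> T x"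
  shows "0 \<le> OPT \<alpha> xs \<and> OPT \<alpha> xs \<le> dist (0,0) T"
proof -
  define Q :: "nat \<Rightarrow> real \<times> real" where "Q i = (if i = 0 then (0,0) else T)" for i
  have feas: "feasible \<alpha> xs Q"
    unfolding feasible_def
  proof (intro conjI allI impI)
    show "Q 0 = (0,0)" by (simp add: Q_def)
  next
    fix i assume "i \<le> length xs"
    show "0 \<le> snd (Q i)" using T0 by (simp add: Q_def)
  next
    fix i j assume i: "i \<le> length xs" and j: "j \<le> i"
    show "covers \<alpha> (Q i) ((0 # xs) ! j)"
    proof (cases "i = 0")
      case True
      then show ?thesis using j by (simp add: Q_def covers_def)
    next
      case False
      have "(0 # xs) ! j \<in> set (0 # xs)" using i j by (intro nth_mem) simp
      moreover have "Q i = T" using False by (simp add: Q_def)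
      ultimately show ?thesis using cov by auto
    qed
  qed
  obtain m where m: "length xs = Suc m" using ne by (cases xs) auto
  have cost: "sol_cost xs Q = dist (0,0) T"
  proof -
    have "sol_cost xs Q = dist (Q 0) (Q (Suc 0)) + (\<Sum>i<m. dist (Q (Suc i)) (Q (Suc (Suc i))))"
      unfolding sol_cost_def m by (rule sum.lessThan_Suc_shift)
    also have "\<dots> = dist (0,0) T" by (simp add: Q_def)
    finally show ?thesis .
  qed
  let ?S = "{sol_cost xs P | P. feasible \<alpha> xs P}"
  have mem: "dist (0,0) T \<in> ?S" using feas cost by force
  have bdd: "bdd_below ?S"
    by (rule bdd_belowI[of _ 0]) (auto simp: sol_cost_def intro!: sum_nonneg)
  have "OPT \<alpha> xs \<le> dist (0,0) T" unfolding OPT_def by (rule cInf_lower[OF mem bdd])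
  moreover have "0 \<le> OPT \<alpha> xs" unfolding OPT_def
    by (rule cInf_greatest) (use mem in \<open>auto simp: sol_cost_def intro!: sum_nonneg\<close>)
  ultimately show ?thesis by simp
qed

definition xq :: "real \<Rightarrow> nat \<Rightarrow> real list" where "xq q k = map (\<lambda>i. (-q)^i) [0..<k]"

lemma take_xq: "i \<le> k \<Longrightarrow> take i (xq q k) = xq q i"
  by (simp add: xq_def take_map take_upt)

lemma length_xq[simp]: "length (xq q k) = k" by (simp add: xq_def)

lemma alg_cost_xq: "alg_cost A (xq q k) = (\<Sum>i<k. dist (A (xq q i)) (A (xq q (Suc i))))"
  unfolding alg_cost_def sol_cost_def length_xq
  by (rule sum.cong) (simp_all add: take_xq)

lemma set_xq: "x \<in> set (xq q k) \<longleftrightarrow> (\<exists>i<k. x = (-q)^i)"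
  by (auto simp: xq_def)

lemma sgn_cases: "(-1::real)^n = 1 \<or> (-1::real)^n = -1"
  by (cases "even n") auto

lemma cover_last:
  assumes A: "online_alg (pi/4) A" and k: "1 \<le> k"
  defines "s \<equiv> (-1::real)^(k-1)"
  shows "snd (A (xq q k)) + s * fst (A (xq q k)) \<ge> q^(k-1)
       \<and> snd (A (xq q k)) - s * fst (A (xq q k)) \<ge> 0"
proof -
  let ?T = "A (xq q k)"
  have cv: "\<forall>x\<in>set (0 # xq q k). covers (pi/4) ?T x" using A unfolding online_alg_def by blast
  have "(-q)^(k-1) \<in> set (xq q k)" unfolding set_xq using k by (intro exI[of _ "k-1"]) simp
  hence mem: "(-q)^(k-1) \<in> set (0 # xq q k)" by simp
  have e: "(-q)^(k-1) = s * q^(k-1)" unfolding s_def by (rule power_minus)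
  have "covers (pi/4) ?T ((-q)^(k-1))" using cv mem by blast
  hence c1: "fst ?T - snd ?T \<le> s * q^(k-1) \<and> s * q^(k-1) \<le> fst ?T + snd ?T"
    unfolding covers45 e .
  have "covers (pi/4) ?T 0" using cv by simp
  hence c0: "fst ?T - snd ?T \<le> 0 \<and> 0 \<le> fst ?T + snd ?T" unfolding covers45 .
  have "s = 1 \<or> s = -1" unfolding s_def by (rule sgn_cases)
  thus ?thesis
  proof
    assume "s = 1" thus ?thesis using c1 c0 by simp
  next
    assume "s = -1" thus ?thesis using c1 c0 by simp
  qed
qed

lemma OPT_xq:
  assumes q1: "1 \<le> q" and b0: "b0 * q = 1" and k: "1 \<le> k"
  shows "0 \<le> OPT (pi/4) (xq q k) \<and> OPT (pi/4) (xq q k) \<le> sqrt ((1 + b0\<^sup>2)/2) * q^(k-1)"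
proof -
  define s :: real where "s = (-1)^(k-1)"
  define p :: real where "p = (if k = 1 then 0 else q^(k-2))"
  define Q where "Q = q^(k-1)"
  define T where "T = (s*(Q - p)/2, (Q + p)/2)"
  have s: "s = 1 \<or> s = -1" unfolding s_def by (rule sgn_cases)
  have p0: "0 \<le> p" using q1 by (simp add: p_def)
  have b0q: "b0 = 1/q" using b0 q1 by (simp add: field_simps)
  have b0pos: "0 < b0" using q1 b0q by simp
  have pQ: "p \<le> b0 * Q"
  proof (cases "k = 1")
    case True then show ?thesis using q1 b0pos by (simp add: p_def Q_def)
  next
    case False
    then have "k - 1 = Suc (k-2)" using k by simp
    then have "Q = q * q^(k-2)" unfolding Q_def by simp
    then have "b0 * Q = q^(k-2)" using b0 by (simp add: mult.assoc[symmetric])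
    then show ?thesis using False by (simp add: p_def)
  qed
  have Q1: "1 \<le> Q" using q1 by (simp add: Q_def one_le_power)
  have b01: "b0 \<le> 1" using b0q q1 by simp
  have "b0 * Q \<le> Q" using b01 Q1 by (simp add: mult_left_le_one_le)
  then have pQ': "p \<le> Q" using pQ by linarith
  have cov: "\<forall>x\<in>set (0 # xq q k). covers (pi/4) T x"
  proof
    fix x assume "x \<in> set (0 # xq q k)"
    then consider "x = 0" | i where "i < k" "x = (-q)^i" by (auto simp: set_xq)
    then have "\<bar>x - fst T\<bar> \<le> snd T"
    proof cases
      case 1
      have "\<bar>s\<bar> = 1" using s by auto
      then have "\<bar>x - fst T\<bar> = (Q - p)/2" using 1 pQ' by (simp add: T_def abs_mult)
      then show ?thesis using p0 by (simp add: T_def)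
    next
      case (2 i)
      show ?thesis
      proof (cases "i = k - 1")
        case True
        have "(-q)^(k-1) = (-1)^(k-1) * q^(k-1)" by (rule power_minus)
        then have "x = s * Q" using 2 True by (simp add: s_def Q_def)
        then have e: "x - fst T = s * ((Q + p)/2)" by (simp add: T_def field_simps)
        have "\<bar>s\<bar> = 1" using s by auto
        have "\<bar>x - fst T\<bar> = \<bar>s\<bar> * ((Q + p)/2)" unfolding e abs_mult using p0 pQ' by simp
        then have "\<bar>x - fst T\<bar> = (Q + p)/2" using \<open>\<bar>s\<bar> = 1\<close> by simp
        then show ?thesis by (simp add: T_def)
      next
        case False
        then have ik: "i \<le> k - 2" "k \<noteq> 1" using 2 by auto
        have "\<bar>x\<bar> = q^i" using 2 q1 by (simp add: power_abs)
        also have "\<dots> \<le> q^(k-2)" using ik q1 by (simp add: power_increasing)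
        finally have "\<bar>x\<bar> \<le> p" using ik by (simp add: p_def)
        moreover have "\<bar>fst T\<bar> = (Q - p)/2"
        proof -
          have "\<bar>s\<bar> = 1" using s by auto
          then show ?thesis using pQ' by (simp add: T_def abs_mult)
        qed
        ultimately have "\<bar>x - fst T\<bar> \<le> p + (Q - p)/2" using abs_triangle_ineq4[of x "fst T"] by linarith
        moreover have "p + (Q - p)/2 = snd T" by (simp add: T_def field_simps)
        ultimately show ?thesis by (simp only:)
      qed
    qed
    then show "covers (pi/4) T x" unfolding covers45 by linarith
  qed
  have T0: "snd T \<ge> 0" using p0 Q1 by (simp add: T_def)
  have ne: "xq q k \<noteq> []" using k by (simp add: xq_def)
  have dT: "dist (0,0) T = sqrt ((Q\<^sup>2 + p\<^sup>2)/2)"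
  proof -
    have "\<bar>s\<bar> = 1" using s by auto
    then have "\<bar>s*(Q - p)/2\<bar> = (Q - p)/2" using pQ' by (simp add: abs_mult)
    then have "(s*(Q - p)/2)\<^sup>2 = ((Q - p)/2)\<^sup>2" by (metis power2_abs)
    moreover have "((Q - p)/2)\<^sup>2 + ((Q + p)/2)\<^sup>2 = (Q\<^sup>2 + p\<^sup>2)/2"
      by (simp add: power2_eq_square field_simps)
    ultimately have "(s*(Q - p)/2)\<^sup>2 + ((Q + p)/2)\<^sup>2 = (Q\<^sup>2 + p\<^sup>2)/2" by simp
    moreover have "dist (0,0) T = sqrt ((fst T)\<^sup>2 + (snd T)\<^sup>2)" unfolding dist_prod_def dist_real_def by simp
    ultimately show ?thesis by (simp add: T_def)
  qed
  have "(Q\<^sup>2 + p\<^sup>2)/2 \<le> ((1 + b0\<^sup>2)/2) * Q\<^sup>2"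
  proof -
    have "p\<^sup>2 \<le> (b0*Q)\<^sup>2" using pQ p0 by (rule power_mono)
    thus ?thesis by (simp add: power_mult_distrib algebra_simps)
  qed
  then have "sqrt ((Q\<^sup>2 + p\<^sup>2)/2) \<le> sqrt ((1 + b0\<^sup>2)/2) * Q"
  proof -
    have "sqrt ((Q\<^sup>2 + p\<^sup>2)/2) \<le> sqrt (((1 + b0\<^sup>2)/2) * Q\<^sup>2)"
      using \<open>(Q\<^sup>2 + p\<^sup>2)/2 \<le> ((1 + b0\<^sup>2)/2) * Q\<^sup>2\<close> by (rule real_sqrt_le_mono)
    also have "\<dots> = sqrt ((1 + b0\<^sup>2)/2) * sqrt (Q\<^sup>2)" by (rule real_sqrt_mult)
    also have "\<dots> = sqrt ((1 + b0\<^sup>2)/2) * Q" using Q1 by simp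
    finally show ?thesis .
  qed
  then show ?thesis using OPT_bounds[OF ne T0 cov] dT by (simp add: Q_def)
qed

lemma param_choice:
  fixes r' :: real
  assumes r0: "0 \<le> r'" and r: "r' < (1 + sqrt 2)/2"
  defines "b0 \<equiv> sqrt 2 - 1"
  defines "c \<equiv> sqrt ((1 + b0\<^sup>2)/2)"
  shows "\<exists>\<beta>. 0 < \<beta> \<and> \<beta> < b0 \<and> r' * (sqrt (2*(1+\<beta>\<^sup>2)) * c) < 1 + \<beta>"
proof -
  have s2: "sqrt 2 * sqrt 2 = 2" by simp
  have s2g: "1 < sqrt 2" by simp
  have b0pos: "0 < b0" unfolding b0_def using s2g by simp
  have e1: "sqrt (2*(1+b0\<^sup>2)) * c = 1 + b0\<^sup>2"
  proof -
    have "sqrt (2*(1+b0\<^sup>2)) * c = sqrt (2*(1+b0\<^sup>2) * ((1 + b0\<^sup>2)/2))" unfolding c_def by (rule real_sqrt_mult[symmetric])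
    also have "2*(1+b0\<^sup>2) * ((1 + b0\<^sup>2)/2) = (1+b0\<^sup>2)\<^sup>2" by (simp add: power2_eq_square)
    finally show ?thesis by simp
  qed
  have e2: "1 + b0\<^sup>2 = 4 - 2 * sqrt 2" unfolding b0_def using s2 by (simp add: power2_eq_square algebra_simps)
  have e3: "(1 + sqrt 2)/2 * (4 - 2 * sqrt 2) = sqrt 2" using s2 by (simp add: algebra_simps)
  have pos: "0 < 4 - 2 * sqrt 2"
  proof -
    have "sqrt 2 < 2" by (rule real_less_lsqrt) auto
    thus ?thesis by simp
  qed
  have "r' * (4 - 2 * sqrt 2) < (1 + sqrt 2)/2 * (4 - 2 * sqrt 2)" using r pos by (rule mult_strict_right_mono)
  hence F0: "r' * (sqrt (2*(1+b0\<^sup>2)) * c) < 1 + b0" using e1 e2 e3 unfolding b0_def by simp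
  define G where "G = (\<lambda>\<beta>::real. 1 + \<beta> - r' * (sqrt (2*(1+\<beta>\<^sup>2)) * c))"
  have "(G \<longlongrightarrow> G b0) (at_left b0)" unfolding G_def by (intro tendsto_intros)
  moreover have "0 < G b0" using F0 unfolding G_def by simp
  ultimately have ev1: "eventually (\<lambda>\<beta>. 0 < G \<beta>) (at_left b0)" by (rule order_tendstoD)
  have ev2: "eventually (\<lambda>\<beta>. \<beta> \<in> {0<..<b0}) (at_left b0)" using b0pos by (rule eventually_at_left_real)
  have "eventually (\<lambda>\<beta>. 0 < G \<beta> \<and> \<beta> \<in> {0<..<b0}) (at_left b0)" using ev1 ev2 by (rule eventually_conj)
  then obtain \<beta> where "0 < G \<beta>" "\<beta> \<in> {0<..<b0}"
    using eventually_happens'[of "at_left b0"] trivial_limit_at_left_real by blast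
  then show ?thesis unfolding G_def by (intro exI[of _ \<beta>]) auto
qed

theorem corollary1:
  fixes A :: "real list \<Rightarrow> real \<times> real" and r :: real
  assumes "online_alg (pi / 4) A"
    and "r < (1 + sqrt 2) / 2"
  shows "\<exists>xs. xs \<noteq> [] \<and> alg_cost A xs > r * OPT (pi / 4) xs"
proof (rule ccontr)
  note A = assms(1)
  assume "\<not> ?thesis"
  hence H: "\<And>xs. xs \<noteq> [] \<Longrightarrow> alg_cost A xs \<le> r * OPT (pi/4) xs" by (auto simp: not_less)
  define r' where "r' = max r 0"
  have r'0: "0 \<le> r'" and rr': "r \<le> r'" by (auto simp: r'_def)
  have r'lt: "r' < (1 + sqrt 2)/2"
  proof -
    have "0 < (1 + sqrt 2)/2" by (simp add: add_pos_nonneg)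
    thus ?thesis using assms(2) by (simp add: r'_def)
  qed
  define b0 where "b0 = sqrt 2 - 1"
  define q where "q = 1 + sqrt 2"
  define c where "c = sqrt ((1 + b0\<^sup>2)/2)"
  have b0q: "b0 * q = 1" unfolding b0_def q_def by (simp add: algebra_simps)
  have q1: "1 \<le> q" unfolding q_def by simp
  have b0lt1: "b0 < 1"
  proof -
    have "sqrt 2 < 2" by (rule real_less_lsqrt) auto
    thus ?thesis unfolding b0_def by simp
  qed
  obtain \<beta> where bpos: "0 < \<beta>" and bb0: "\<beta> < b0" and bk: "r' * (sqrt (2*(1+\<beta>\<^sup>2)) * c) < 1 + \<beta>"
    using param_choice[OF r'0 r'lt] unfolding b0_def c_def by blast
  define M where "M = sqrt (2*(1+\<beta>\<^sup>2))"
  define \<kappa> where "\<kappa> = r' * (M * c)"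
  have \<kappa>lt: "\<kappa> < 1 + \<beta>" using bk by (simp add: \<kappa>_def M_def)
  have b1: "\<beta> < 1" using bb0 b0lt1 by simp
  have M0: "0 \<le> M" by (simp add: M_def)
  define t where "t = \<beta> * q"
  have t0: "0 < t" using bpos q1 by (simp add: t_def)
  have t1: "t < 1"
  proof -
    have "\<beta> * q < b0 * q" using bb0 q1 by simp
    thus ?thesis using b0q by (simp add: t_def)
  qed
  define gap where "gap = (1 - \<beta>) * (1 + \<beta> - \<kappa>)"
  have gap0: "0 < gap" using b1 \<kappa>lt by (simp add: gap_def)
  obtain m where m: "t^m < gap / (\<bar>\<kappa> - 1\<bar> + 1)"
    using real_arch_pow_inv[of "gap / (\<bar>\<kappa> - 1\<bar> + 1)" t] gap0 t1 by (auto simp: add_pos_nonneg)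
  define n where "n = m + 2"
  define P where "P k = A (xq q k)" for k
  define C where "C k = alg_cost A (xq q k)" for k
  define s where "s k = (-1::real)^(k-1)" for k
  define \<pi> where "\<pi> k T = snd T + s k * fst T" for k and T :: "real \<times> real"
  define \<sigma> where "\<sigma> k T = snd T - s k * fst T" for k and T :: "real \<times> real"
  have CS: "C (Suc k) = C k + dist (P k) (P (Suc k))" for k
    unfolding C_def P_def alg_cost_xq by simp
  have P0: "P 0 = (0,0)" using A by (simp add: P_def xq_def online_alg_def)
  have cov: "q^(k-1) \<le> \<pi> k (P k) \<and> 0 \<le> \<sigma> k (P k)" if "1 \<le> k" for k
    using cover_last[OF A that, of q] unfolding \<pi>_def \<sigma>_def P_def s_def by simp
  have sflip: "s (Suc k) = - s k" if k1: "1 \<le> k" for k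
  proof -
    obtain j where "k = Suc j" using k1 by (cases k) auto
    thus ?thesis by (simp add: s_def)
  qed
  have scase: "s k = 1 \<or> s k = -1" for k unfolding s_def by (rule sgn_cases)
  have Cb: "C k \<le> r' * c * q^(k-1)" if "1 \<le> k" for k
  proof -
    have ne: "xq q k \<noteq> []" using that by (simp add: xq_def)
    have O: "0 \<le> OPT (pi/4) (xq q k) \<and> OPT (pi/4) (xq q k) \<le> c * q^(k-1)"
      using OPT_xq[OF q1 b0q that] unfolding c_def .
    have "C k \<le> r * OPT (pi/4) (xq q k)" unfolding C_def by (rule H[OF ne])
    also have "\<dots> \<le> r' * OPT (pi/4) (xq q k)" using O rr' by (simp add: mult_right_mono)
    also have "\<dots> \<le> r' * (c * q^(k-1))" using O r'0 by (simp add: mult_left_mono)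
    finally show ?thesis by (simp add: mult.assoc)
  qed
  define S1 where "S1 k = (\<Sum>i\<in>{1..<k}. (\<beta>^i - \<beta>^(Suc i)) * C i)" for k
  define S2 where "S2 k = (\<Sum>i\<in>{1..<k}. \<beta>^i * q^(i-1))" for k
  have J: "(1 - \<beta>\<^sup>2) * S2 k + \<beta>^k * \<pi> k (P k) + \<beta>^(Suc k) * \<sigma> k (P k) \<le> M * (S1 k + \<beta>^k * C k)"
    if "1 \<le> k" for k
    using that
  proof (induct k rule: nat_induct_at_least)
    case base
    have st: "(\<pi> 1 (P 1) - \<pi> 1 (P 0)) + \<beta> * (\<sigma> 1 (P 1) - \<sigma> 1 (P 0)) \<le> M * dist (P 0) (P 1)"
      using step_ineq[OF scase[of 1], of "P 1" "P 0" \<beta>] unfolding \<pi>_def \<sigma>_def M_def by simp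
    have "\<beta> * ((\<pi> 1 (P 1) - \<pi> 1 (P 0)) + \<beta> * (\<sigma> 1 (P 1) - \<sigma> 1 (P 0))) \<le> \<beta> * (M * dist (P 0) (P 1))"
      using st bpos by (simp add: mult_left_mono)
    moreover have "C 1 = dist (P 0) (P 1)" using CS[of 0] by (simp add: C_def xq_def alg_cost_def sol_cost_def)
    ultimately show ?case using P0 by (simp add: S1_def S2_def \<pi>_def \<sigma>_def power2_eq_square algebra_simps)
  next
    case (Suc k)
    note k1 = Suc.hyps(1) and IH = Suc.hyps(2)
    define b where "b = \<beta>^k"
    define d where "d = dist (P k) (P (Suc k))"
    define \<pi>0 where "\<pi>0 = \<pi> k (P k)"
    define \<sigma>0 where "\<sigma>0 = \<sigma> k (P k)"
    define \<pi>1 where "\<pi>1 = \<pi> k (P (Suc k))"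
    define \<sigma>1 where "\<sigma>1 = \<sigma> k (P (Suc k))"
    have b0': "0 \<le> b" by (simp add: b_def bpos less_imp_le)
    have S1S: "S1 (Suc k) = S1 k + (b - b*\<beta>) * C k" unfolding S1_def b_def using k1 by (simp add: mult.commute)
    have S2S: "S2 (Suc k) = S2 k + b * q^(k-1)" unfolding S2_def b_def using k1 by simp
    have pS: "\<pi> (Suc k) T = \<sigma> k T" and sS: "\<sigma> (Suc k) T = \<pi> k T" for T
      unfolding \<pi>_def \<sigma>_def using sflip[OF k1] by simp_all
    have st: "(\<sigma>1 - \<sigma>0) + \<beta> * (\<pi>1 - \<pi>0) \<le> M * d"
    proof -
      have "-s k = 1 \<or> -s k = -1" using scase[of k] by auto
      from step_ineq[OF this, of "P (Suc k)" "P k" \<beta>]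
      show ?thesis unfolding \<sigma>1_def \<sigma>0_def \<pi>1_def \<pi>0_def \<pi>_def \<sigma>_def M_def d_def by simp
    qed
    have F1: "(b*\<beta>) * ((\<sigma>1 - \<sigma>0) + \<beta> * (\<pi>1 - \<pi>0)) \<le> (b*\<beta>) * (M * d)"
      using st b0' bpos by (simp add: mult_left_mono)
    have F2: "(b*(1-\<beta>\<^sup>2)) * q^(k-1) \<le> (b*(1-\<beta>\<^sup>2)) * \<pi>0"
    proof -
      have "0 \<le> 1 - \<beta>\<^sup>2" using b1 bpos by (simp add: power2_eq_square) (metis less_eq_real_def mult_le_one)
      then have "0 \<le> b*(1-\<beta>\<^sup>2)" using b0' by simp
      moreover have "q^(k-1) \<le> \<pi>0" using cov[OF k1] by (simp add: \<pi>0_def)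
      ultimately show ?thesis by (simp add: mult_left_mono)
    qed
    have IH': "(1 - \<beta>\<^sup>2) * S2 k + b * \<pi>0 + (b*\<beta>) * \<sigma>0 \<le> M * (S1 k + b * C k)"
      using IH by (simp add: b_def \<pi>0_def \<sigma>0_def mult.commute)
    have goal_eq: "M * (S1 (Suc k) + \<beta>^(Suc k) * C (Suc k))
        - ((1 - \<beta>\<^sup>2) * S2 (Suc k) + \<beta>^(Suc k) * \<pi> (Suc k) (P (Suc k)) + \<beta>^(Suc (Suc k)) * \<sigma> (Suc k) (P (Suc k)))
      = (M * (S1 k + b * C k) - ((1 - \<beta>\<^sup>2) * S2 k + b * \<pi>0 + (b*\<beta>) * \<sigma>0))
        + ((b*\<beta>) * (M * d) - (b*\<beta>) * ((\<sigma>1 - \<sigma>0) + \<beta> * (\<pi>1 - \<pi>0)))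
        + ((b*(1-\<beta>\<^sup>2)) * \<pi>0 - (b*(1-\<beta>\<^sup>2)) * q^(k-1))"
      unfolding S1S S2S pS sS CS
      by (simp add: b_def d_def \<pi>0_def \<sigma>0_def \<pi>1_def \<sigma>1_def power2_eq_square algebra_simps)
    show ?case using goal_eq IH' F1 F2 by linarith
  qed
  have n2: "2 \<le> n" and n1: "1 \<le> n" by (simp_all add: n_def)
  have Jn: "(1 - \<beta>\<^sup>2) * S2 n + \<beta>^n * \<pi> n (P n) + \<beta>^(Suc n) * \<sigma> n (P n) \<le> M * (S1 n + \<beta>^n * C n)"
    using J[OF n1] .
  have lowR: "(1 - \<beta>\<^sup>2) * S2 n + \<beta>^n * q^(n-1) \<le> (1 - \<beta>\<^sup>2) * S2 n + \<beta>^n * \<pi> n (P n) + \<beta>^(Suc n) * \<sigma> n (P n)"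
  proof -
    have "\<beta>^n * q^(n-1) \<le> \<beta>^n * \<pi> n (P n)" using cov[OF n1] bpos by (simp add: mult_left_mono)
    moreover have "0 \<le> \<beta>^(Suc n) * \<sigma> n (P n)" using cov[OF n1] bpos by simp
    ultimately show ?thesis by linarith
  qed
  have S1b: "S1 n \<le> r' * c * (1 - \<beta>) * S2 n"
  proof -
    have "S1 n \<le> (\<Sum>i\<in>{1..<n}. (\<beta>^i - \<beta>^(Suc i)) * (r' * c * q^(i-1)))"
      unfolding S1_def
    proof (rule sum_mono)
      fix i assume "i \<in> {1..<n}"
      then have i1: "1 \<le> i" by simp
      have "0 \<le> \<beta>^i - \<beta>^(Suc i)"
      proof -
        have "\<beta>^(Suc i) \<le> \<beta>^i" using bpos b1 by (simp add: power_Suc_le_self)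
        thus ?thesis by simp
      qed
      thus "(\<beta>^i - \<beta>^(Suc i)) * C i \<le> (\<beta>^i - \<beta>^(Suc i)) * (r' * c * q^(i-1))"
        by (rule mult_left_mono[OF Cb[OF i1]])
    qed
    also have "\<dots> = r' * c * (1 - \<beta>) * S2 n" unfolding S2_def sum_distrib_left
      by (rule sum.cong) (simp_all add: algebra_simps)
    finally show ?thesis .
  qed
  have Cn: "\<beta>^n * C n \<le> \<beta>^n * (r' * c * q^(n-1))" using Cb[OF n1] bpos by (simp add: mult_left_mono)
  have up: "M * (S1 n + \<beta>^n * C n) \<le> \<kappa> * (1 - \<beta>) * S2 n + \<kappa> * (\<beta>^n * q^(n-1))"
  proof -
    have "M * (S1 n + \<beta>^n * C n) \<le> M * (r' * c * (1 - \<beta>) * S2 n + \<beta>^n * (r' * c * q^(n-1)))"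
      using S1b Cn M0 by (simp add: mult_left_mono)
    also have "\<dots> = \<kappa> * (1 - \<beta>) * S2 n + \<kappa> * (\<beta>^n * q^(n-1))" by (simp add: \<kappa>_def algebra_simps)
    finally show ?thesis .
  qed
  define E where "E = t^(m+1)"
  have bq: "\<beta>^n * q^(n-1) = \<beta> * E"
  proof -
    have "\<beta>^n * q^(n-1) = \<beta> * (\<beta>^(m+1) * q^(m+1))" by (simp add: n_def)
    also have "\<dots> = \<beta> * E" by (simp add: E_def t_def power_mult_distrib)
    finally show ?thesis .
  qed
  have S2b: "\<beta> \<le> S2 n"
  proof -
    have "\<beta>^1 * q^(1-1) \<le> S2 n" unfolding S2_def
      by (rule member_le_sum) (use n2 bpos q1 in auto)
    thus ?thesis by simp
  qed
  have key: "gap * S2 n \<le> (\<kappa> - 1) * (\<beta> * E)"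
  proof -
    have "(1 - \<beta>\<^sup>2) * S2 n + \<beta> * E \<le> \<kappa> * (1 - \<beta>) * S2 n + \<kappa> * (\<beta> * E)"
      using Jn lowR[unfolded bq] up[unfolded bq] by linarith
    thus ?thesis by (simp add: gap_def power2_eq_square algebra_simps)
  qed
  have "gap * \<beta> \<le> gap * S2 n" using S2b gap0 by (simp add: mult_left_mono)
  with key have "gap * \<beta> \<le> (\<kappa> - 1) * E * \<beta>" by (simp add: algebra_simps)
  hence g1: "gap \<le> (\<kappa> - 1) * E" using bpos by simp
  have E0: "0 \<le> E" using t0 by (simp add: E_def)
  have Em: "E \<le> t^m" using t0 t1 by (simp add: E_def power_Suc_le_self less_imp_le)
  have "(\<kappa> - 1) * E \<le> \<bar>\<kappa> - 1\<bar> * E" using E0 by (simp add: mult_right_mono)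
  also have "\<dots> \<le> (\<bar>\<kappa> - 1\<bar> + 1) * t^m" using Em E0 by (intro mult_mono) auto
  also have "\<dots> < gap" using m by (simp add: pos_less_divide_eq add_pos_nonneg mult.commute)
  finally show False using g1 by simp
qed

end
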